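(* Every equivalence class (under $\sim$) of balanced words contains a unique reduced word, and this reduced word is the minimal word of the equivalence class with respect to alphabetical order.
   Context: $\mathcal{A}$ is the free associative $\mathbb{C}$-algebra on noncommuting generators $L,R$; words are finite products of these letters, and a subword is a contiguous block of letters. A word is balanced if it contains equally many $L$'s and $R$'s. $\mathcal{J}$ is the two-sided ideal generated by $\{FG-GF : F,G \text{ nonempty balanced words}\}$, and $X\sim Y$ means $X-Y\in\mathcal{J}$ (equivalence classes of words are finite). Alphabetical order is the lexicographic order on words with $L$ before $R$, a proper prefix coming before its extensions (e.g. $LL<LLR$, $LLL<LR$). A word is prime if it is nonempty, balanced, and not a product of two nonempty balanced words. For a balanced word $W=a_1\cdots a_n$, $e_k(W)=\sum_{i=1}^k\overline{a_i}$ with $\overline{R}=1$, $\overline{L}=-1$. A prime $P$ of length $n$ is an upper prime if $e_k(P)>0$ for $1\le k\le n-1$, and a lower prime if $e_k(P)<0$ for $1\le k\le n-1$. A word is reduced if it contains no subword $UD$ with $U$ an upper prime and $D$ a lower prime. *)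

theory Defs
  imports Complex_Main
begin

datatype letter = L | R

type_synonym word = "letter list"

text \<open>The free associative algebra over the complex numbers on L, R: finitely
  supported coefficient functions on words, with the concatenation (Cauchy) product.\<close>

definition falg :: "(word \<Rightarrow> complex) set" where
  "falg = {f. finite {w. f w \<noteq> 0}}"

definition mono :: "word \<Rightarrow> (word \<Rightarrow> complex)" where
  "mono u = (\<lambda>w. if w = u then 1 else 0)"

definition amult :: "(word \<Rightarrow> complex) \<Rightarrow> (word \<Rightarrow> complex) \<Rightarrow> (word \<Rightarrow> complex)" where
  "amult f g = (\<lambda>w. \<Sum>i\<le>length w. f (take i w) * g (drop i w))"

definition balanced :: "word \<Rightarrow> bool" where
  "balanced w \<longleftrightarrow> length (filter (\<lambda>a. a = L) w) = length (filter (\<lambda>a. a = R) w)"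

inductive_set Jideal :: "(word \<Rightarrow> complex) set" where
  zero: "(\<lambda>_. 0) \<in> Jideal"
| gen: "F \<noteq> [] \<Longrightarrow> G \<noteq> [] \<Longrightarrow> balanced F \<Longrightarrow> balanced G \<Longrightarrow>
        (\<lambda>w. mono (F @ G) w - mono (G @ F) w) \<in> Jideal"
| add: "x \<in> Jideal \<Longrightarrow> y \<in> Jideal \<Longrightarrow> (\<lambda>w. x w + y w) \<in> Jideal"
| smult: "x \<in> Jideal \<Longrightarrow> (\<lambda>w. c * x w) \<in> Jideal"
| lmult: "x \<in> Jideal \<Longrightarrow> a \<in> falg \<Longrightarrow> amult a x \<in> Jideal"
| rmult: "x \<in> Jideal \<Longrightarrow> a \<in> falg \<Longrightarrow> amult x a \<in> Jideal"

definition wequiv :: "word \<Rightarrow> word \<Rightarrow> bool" (infix "\<approx>" 50) where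
  "X \<approx> Y \<longleftrightarrow> (\<lambda>w. mono X w - mono Y w) \<in> Jideal"

text \<open>Alphabetical order: lexicographic with L before R, proper prefixes first.\<close>
definition alph_less :: "word \<Rightarrow> word \<Rightarrow> bool" where
  "alph_less u v \<longleftrightarrow> (u, v) \<in> lexord {(L, R)}"

definition alph_le :: "word \<Rightarrow> word \<Rightarrow> bool" where
  "alph_le u v \<longleftrightarrow> u = v \<or> alph_less u v"

definition prime_word :: "word \<Rightarrow> bool" where
  "prime_word w \<longleftrightarrow> w \<noteq> [] \<and> balanced w \<and>
     \<not> (\<exists>u v. u \<noteq> [] \<and> v \<noteq> [] \<and> balanced u \<and> balanced v \<and> w = u @ v)"

definition lval :: "letter \<Rightarrow> int" where
  "lval a = (if a = R then 1 else -1)"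

definition ek :: "nat \<Rightarrow> word \<Rightarrow> int" where
  "ek k w = (\<Sum>i<k. lval (w ! i))"

definition upper_prime :: "word \<Rightarrow> bool" where
  "upper_prime w \<longleftrightarrow> prime_word w \<and> (\<forall>k. 1 \<le> k \<and> k \<le> length w - 1 \<longrightarrow> ek k w > 0)"

definition lower_prime :: "word \<Rightarrow> bool" where
  "lower_prime w \<longleftrightarrow> prime_word w \<and> (\<forall>k. 1 \<le> k \<and> k \<le> length w - 1 \<longrightarrow> ek k w < 0)"

definition reduced :: "word \<Rightarrow> bool" where
  "reduced w \<longleftrightarrow> \<not> (\<exists>a U D b. w = a @ U @ D @ b \<and> upper_prime U \<and> lower_prime D)"

end

theory Submission
  imports Defs "HOL-Library.Multiset"
begin


definition supp :: "(word \<Rightarrow> complex) \<Rightarrow> word set" where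
  "supp f = {w. f w \<noteq> 0}"

definition sw :: "word \<Rightarrow> word \<Rightarrow> bool" where
  "sw u v \<longleftrightarrow> (\<exists>a F G b. F \<noteq> [] \<and> G \<noteq> [] \<and> balanced F \<and> balanced G \<and>
      u = a @ F @ G @ b \<and> v = a @ G @ F @ b)"

definition swclosed :: "word set \<Rightarrow> bool" where
  "swclosed S \<longleftrightarrow> (\<forall>u v. sw u v \<longrightarrow> (u \<in> S \<longleftrightarrow> v \<in> S))"

definition KK :: "(word \<Rightarrow> complex) \<Rightarrow> bool" where
  "KK f \<longleftrightarrow> finite (supp f) \<and> (\<forall>S. swclosed S \<longrightarrow> sum f (supp f \<inter> S) = 0)"

lemma sum_supp:
  assumes "finite B" "supp f \<subseteq> B"
  shows "sum f (supp f \<inter> S) = sum f (B \<inter> S)"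
  by (rule sum.mono_neutral_left) (use assms in \<open>auto simp: supp_def\<close>)

lemma swclosed_pre: "swclosed S \<Longrightarrow> swclosed {v. u @ v \<in> S}"
  unfolding swclosed_def sw_def
proof (intro allI impI)
  fix x y
  assume S: "\<forall>u v. (\<exists>a F G b. F \<noteq> [] \<and> G \<noteq> [] \<and> balanced F \<and> balanced G \<and>
      u = a @ F @ G @ b \<and> v = a @ G @ F @ b) \<longrightarrow> (u \<in> S) = (v \<in> S)"
    and "\<exists>a F G b. F \<noteq> [] \<and> G \<noteq> [] \<and> balanced F \<and> balanced G \<and>
      x = a @ F @ G @ b \<and> y = a @ G @ F @ b"
  then obtain a F G b where h: "F \<noteq> []" "G \<noteq> []" "balanced F" "balanced G"
      "x = a @ F @ G @ b" "y = a @ G @ F @ b" by blast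
  have "(u @ x \<in> S) = (u @ y \<in> S)"
    using S[rule_format, of "u @ x" "u @ y"] h by (metis append.assoc)
  then show "(x \<in> {v. u @ v \<in> S}) = (y \<in> {v. u @ v \<in> S})" by simp
qed

lemma swclosed_suf: "swclosed S \<Longrightarrow> swclosed {v. v @ u \<in> S}"
  unfolding swclosed_def sw_def
proof (intro allI impI)
  fix x y
  assume S: "\<forall>u v. (\<exists>a F G b. F \<noteq> [] \<and> G \<noteq> [] \<and> balanced F \<and> balanced G \<and>
      u = a @ F @ G @ b \<and> v = a @ G @ F @ b) \<longrightarrow> (u \<in> S) = (v \<in> S)"
    and "\<exists>a F G b. F \<noteq> [] \<and> G \<noteq> [] \<and> balanced F \<and> balanced G \<and>
      x = a @ F @ G @ b \<and> y = a @ G @ F @ b"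
  then obtain a F G b where h: "F \<noteq> []" "G \<noteq> []" "balanced F" "balanced G"
      "x = a @ F @ G @ b" "y = a @ G @ F @ b" by blast
  have "(x @ u \<in> S) = (y @ u \<in> S)"
    using S[rule_format, of "x @ u" "y @ u"] h by (metis append.assoc)
  then show "(x \<in> {v. v @ u \<in> S}) = (y \<in> {v. v @ u \<in> S})" by simp
qed

lemma KK_zero: "KK (\<lambda>_. 0)"
  by (simp add: KK_def supp_def)

lemma KK_add:
  assumes "KK f" "KK g" shows "KK (\<lambda>w. f w + g w)"
proof -
  let ?B = "supp f \<union> supp g"
  have fin: "finite ?B" using assms by (simp add: KK_def)
  have sub: "supp (\<lambda>w. f w + g w) \<subseteq> ?B" by (auto simp: supp_def)
  show ?thesis unfolding KK_def
  proof (intro conjI allI impI)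
    show "finite (supp (\<lambda>w. f w + g w))" using fin sub finite_subset by blast
    fix S assume S: "swclosed S"
    have "sum (\<lambda>w. f w + g w) (supp (\<lambda>w. f w + g w) \<inter> S)
        = sum (\<lambda>w. f w + g w) (?B \<inter> S)" by (rule sum_supp[OF fin sub])
    also have "\<dots> = sum f (?B \<inter> S) + sum g (?B \<inter> S)" by (simp add: sum.distrib)
    also have "sum f (?B \<inter> S) = sum f (supp f \<inter> S)"
      by (rule sum_supp[symmetric]) (use fin in auto)
    also have "sum g (?B \<inter> S) = sum g (supp g \<inter> S)"
      by (rule sum_supp[symmetric]) (use fin in auto)
    finally show "sum (\<lambda>w. f w + g w) (supp (\<lambda>w. f w + g w) \<inter> S) = 0"
      using assms S by (simp add: KK_def)
  qed
qed

lemma KK_smult: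
  assumes "KK f" shows "KK (\<lambda>w. c * f w)"
proof -
  have fin: "finite (supp f)" using assms by (simp add: KK_def)
  have sub: "supp (\<lambda>w. c * f w) \<subseteq> supp f" by (auto simp: supp_def)
  show ?thesis unfolding KK_def
  proof (intro conjI allI impI)
    show "finite (supp (\<lambda>w. c * f w))" using fin sub finite_subset by blast
    fix S assume S: "swclosed S"
    have "sum (\<lambda>w. c * f w) (supp (\<lambda>w. c * f w) \<inter> S) = sum (\<lambda>w. c * f w) (supp f \<inter> S)"
      by (rule sum_supp[OF fin sub])
    also have "\<dots> = c * sum f (supp f \<inter> S)" by (simp add: sum_distrib_left)
    finally show "sum (\<lambda>w. c * f w) (supp (\<lambda>w. c * f w) \<inter> S) = 0"
      using assms S by (simp add: KK_def)
  qed
qed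

lemma KK_sum:
  assumes "finite U" "\<And>u. u \<in> U \<Longrightarrow> KK (g u)"
  shows "KK (\<lambda>w. \<Sum>u\<in>U. g u w)"
  using assms
proof (induction U rule: finite_induct)
  case empty then show ?case by (simp add: KK_zero)
next
  case (insert v U)
  have "KK (\<lambda>w. g v w + (\<Sum>u\<in>U. g u w))"
    by (rule KK_add) (use insert in auto)
  then show ?case using insert by simp
qed

lemma amult_mono_left:
  "amult (mono u) x w = (if take (length u) w = u then x (drop (length u) w) else 0)"
proof -
  have "amult (mono u) x w = (\<Sum>i\<le>length w. (if i = length u then
      (if take (length u) w = u then x (drop (length u) w) else 0) else 0))"
    unfolding amult_def mono_def
  proof (rule sum.cong)
    fix i assume "i \<in> {..length w}"
    then have "i \<le> length w" by simp
    then have "take i w = u \<longleftrightarrow> i = length u \<and> take (length u) w = u" by auto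
    then show "(if take i w = u then 1 else 0) * x (drop i w) = (if i = length u then
      (if take (length u) w = u then x (drop (length u) w) else 0) else 0)" by auto
  qed simp
  also have "\<dots> = (if take (length u) w = u then x (drop (length u) w) else 0)"
    by (cases "length u \<le> length w") (auto simp: min_def dest: arg_cong[where f=length])
  finally show ?thesis .
qed

lemma amult_mono_right:
  "amult x (mono u) w = (if length u \<le> length w \<and> drop (length w - length u) w = u
      then x (take (length w - length u) w) else 0)"
proof -
  have "amult x (mono u) w = (\<Sum>i\<le>length w. (if i = length w - length u then
      (if length u \<le> length w \<and> drop (length w - length u) w = u
       then x (take (length w - length u) w) else 0) else 0))"
    unfolding amult_def mono_def
  proof (rule sum.cong)
    fix i assume "i \<in> {..length w}"
    then have "i \<le> length w" by simp
    then have "drop i w = u \<longleftrightarrow> i = length w - length u \<and> length u \<le> length w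
        \<and> drop (length w - length u) w = u" by auto
    then show "x (take i w) * (if drop i w = u then 1 else 0) = (if i = length w - length u then
      (if length u \<le> length w \<and> drop (length w - length u) w = u
       then x (take (length w - length u) w) else 0) else 0)" by auto
  qed simp
  also have "\<dots> = (if length u \<le> length w \<and> drop (length w - length u) w = u
      then x (take (length w - length u) w) else 0)"
    by auto
  finally show ?thesis .
qed

lemma KK_lshift:
  assumes "KK x" shows "KK (amult (mono u) x)"
proof -
  define g where "g = amult (mono u) x"
  have fin: "finite (supp x)" using assms by (simp add: KK_def)
  have g_app: "g (u @ v) = x v" for v by (simp add: g_def amult_mono_left)
  have sup: "supp g = (\<lambda>v. u @ v) ` supp x"
  proof
    show "supp g \<subseteq> (\<lambda>v. u @ v) ` supp x"
    proof
      fix w assume "w \<in> supp g"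
      then have gw: "g w \<noteq> 0" by (simp add: supp_def)
      have t: "take (length u) w = u"
      proof (rule ccontr)
        assume "take (length u) w \<noteq> u"
        then have "g w = 0" by (simp add: g_def amult_mono_left)
        then show False using gw by simp
      qed
      then have "x (drop (length u) w) \<noteq> 0" using gw by (simp add: g_def amult_mono_left)
      then have "drop (length u) w \<in> supp x" by (simp add: supp_def)
      moreover have "w = u @ drop (length u) w" using t by (metis append_take_drop_id)
      ultimately show "w \<in> (\<lambda>v. u @ v) ` supp x" by blast
    qed
    show "(\<lambda>v. u @ v) ` supp x \<subseteq> supp g" using g_app by (auto simp: supp_def)
  qed
  have "KK g" unfolding KK_def
  proof (intro conjI allI impI)
    show "finite (supp g)" using sup fin by simp
    fix S assume S: "swclosed S"
    have e: "supp g \<inter> S = (\<lambda>v. u @ v) ` (supp x \<inter> {v. u @ v \<in> S})" unfolding sup by blast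
    have inj: "inj_on (\<lambda>v. u @ v) (supp x \<inter> {v. u @ v \<in> S})" by (simp add: inj_on_def)
    have "sum g (supp g \<inter> S) = sum (g \<circ> (\<lambda>v. u @ v)) (supp x \<inter> {v. u @ v \<in> S})"
      unfolding e by (rule sum.reindex[OF inj])
    also have "\<dots> = sum x (supp x \<inter> {v. u @ v \<in> S})" by (simp add: g_app comp_def)
    also have "\<dots> = 0" using assms swclosed_pre[OF S] by (simp add: KK_def)
    finally show "sum g (supp g \<inter> S) = 0" .
  qed
  then show ?thesis by (simp add: g_def)
qed

lemma KK_rshift:
  assumes "KK x" shows "KK (amult x (mono u))"
proof -
  define g where "g = amult x (mono u)"
  have fin: "finite (supp x)" using assms by (simp add: KK_def)
  have g_app: "g (v @ u) = x v" for v by (simp add: g_def amult_mono_right)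
  have sup: "supp g = (\<lambda>v. v @ u) ` supp x"
  proof
    show "supp g \<subseteq> (\<lambda>v. v @ u) ` supp x"
    proof
      fix w assume "w \<in> supp g"
      then have gw: "g w \<noteq> 0" by (simp add: supp_def)
      have t: "drop (length w - length u) w = u"
      proof (rule ccontr)
        assume "drop (length w - length u) w \<noteq> u"
        then have "g w = 0" by (simp add: g_def amult_mono_right)
        then show False using gw by simp
      qed
      have "length u \<le> length w" using t by (metis diff_le_self length_drop)
      then have "x (take (length w - length u) w) \<noteq> 0" using gw t by (simp add: g_def amult_mono_right)
      then have "take (length w - length u) w \<in> supp x" by (simp add: supp_def)
      moreover have "w = take (length w - length u) w @ u" using t by (metis append_take_drop_id)
      ultimately show "w \<in> (\<lambda>v. v @ u) ` supp x" by blast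
    qed
    show "(\<lambda>v. v @ u) ` supp x \<subseteq> supp g" using g_app by (auto simp: supp_def)
  qed
  have "KK g" unfolding KK_def
  proof (intro conjI allI impI)
    show "finite (supp g)" using sup fin by simp
    fix S assume S: "swclosed S"
    have e: "supp g \<inter> S = (\<lambda>v. v @ u) ` (supp x \<inter> {v. v @ u \<in> S})" unfolding sup by blast
    have inj: "inj_on (\<lambda>v. v @ u) (supp x \<inter> {v. v @ u \<in> S})" by (simp add: inj_on_def)
    have "sum g (supp g \<inter> S) = sum (g \<circ> (\<lambda>v. v @ u)) (supp x \<inter> {v. v @ u \<in> S})"
      unfolding e by (rule sum.reindex[OF inj])
    also have "\<dots> = sum x (supp x \<inter> {v. v @ u \<in> S})" by (simp add: g_app comp_def)
    also have "\<dots> = 0" using assms swclosed_suf[OF S] by (simp add: KK_def)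
    finally show "sum g (supp g \<inter> S) = 0" .
  qed
  then show ?thesis by (simp add: g_def)
qed

lemma delta_sum:
  assumes "finite A" "supp a \<subseteq> A" shows "(\<Sum>u\<in>A. a u * mono u t) = a t"
proof -
  have "(\<Sum>u\<in>A. a u * mono u t) = (\<Sum>u\<in>A. if t = u then a t else 0)"
    by (rule sum.cong) (auto simp: mono_def)
  also have "\<dots> = (if t \<in> A then a t else 0)" using assms(1) by simp
  also have "\<dots> = a t" using assms(2) by (auto simp: supp_def)
  finally show ?thesis .
qed

lemma amult_decomp_left:
  assumes "a \<in> falg"
  shows "amult a x = (\<lambda>w. \<Sum>u\<in>supp a. a u * amult (mono u) x w)"
proof
  fix w
  have fin: "finite (supp a)" using assms by (simp add: falg_def supp_def)
  have "(\<Sum>u\<in>supp a. a u * amult (mono u) x w)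
      = (\<Sum>u\<in>supp a. \<Sum>i\<le>length w. a u * mono u (take i w) * x (drop i w))"
    by (simp add: amult_def sum_distrib_left mult.assoc)
  also have "\<dots> = (\<Sum>i\<le>length w. \<Sum>u\<in>supp a. a u * mono u (take i w) * x (drop i w))"
    by (rule sum.swap)
  also have "\<dots> = (\<Sum>i\<le>length w. (\<Sum>u\<in>supp a. a u * mono u (take i w)) * x (drop i w))"
    by (simp add: sum_distrib_right)
  also have "\<dots> = amult a x w"
    by (simp add: amult_def delta_sum[OF fin])
  finally show "amult a x w = (\<Sum>u\<in>supp a. a u * amult (mono u) x w)" by simp
qed

lemma amult_decomp_right:
  assumes "a \<in> falg"
  shows "amult x a = (\<lambda>w. \<Sum>u\<in>supp a. a u * amult x (mono u) w)"
proof
  fix w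
  have fin: "finite (supp a)" using assms by (simp add: falg_def supp_def)
  have "(\<Sum>u\<in>supp a. a u * amult x (mono u) w)
      = (\<Sum>u\<in>supp a. \<Sum>i\<le>length w. x (take i w) * (a u * mono u (drop i w)))"
    by (simp add: amult_def sum_distrib_left mult.assoc mult.left_commute)
  also have "\<dots> = (\<Sum>i\<le>length w. \<Sum>u\<in>supp a. x (take i w) * (a u * mono u (drop i w)))"
    by (rule sum.swap)
  also have "\<dots> = (\<Sum>i\<le>length w. x (take i w) * (\<Sum>u\<in>supp a. a u * mono u (drop i w)))"
    by (simp add: sum_distrib_left)
  also have "\<dots> = amult x a w"
    by (simp add: amult_def delta_sum[OF fin])
  finally show "amult x a w = (\<Sum>u\<in>supp a. a u * amult x (mono u) w)" by simp
qed

lemma KK_lmult: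
  assumes "KK x" "a \<in> falg" shows "KK (amult a x)"
proof -
  have fin: "finite (supp a)" using assms by (simp add: falg_def supp_def)
  have "KK (\<lambda>w. \<Sum>u\<in>supp a. a u * amult (mono u) x w)"
    by (rule KK_sum[OF fin]) (intro KK_smult KK_lshift assms(1))
  then show ?thesis using amult_decomp_left[OF assms(2)] by simp
qed

lemma KK_rmult:
  assumes "KK x" "a \<in> falg" shows "KK (amult x a)"
proof -
  have fin: "finite (supp a)" using assms by (simp add: falg_def supp_def)
  have "KK (\<lambda>w. \<Sum>u\<in>supp a. a u * amult x (mono u) w)"
    by (rule KK_sum[OF fin]) (intro KK_smult KK_rshift assms(1))
  then show ?thesis using amult_decomp_right[OF assms(2)] by simp
qed

lemma KK_gen:
  assumes "F \<noteq> []" "G \<noteq> []" "balanced F" "balanced G"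
  shows "KK (\<lambda>w. mono (F @ G) w - mono (G @ F) w)"
proof (cases "F @ G = G @ F")
  case True
  then show ?thesis using KK_zero by (simp add: mono_def)
next
  case False
  let ?f = "\<lambda>w. mono (F @ G) w - mono (G @ F) w"
  have sub: "supp ?f \<subseteq> {F @ G, G @ F}" by (auto simp: supp_def mono_def)
  have sw: "sw (F @ G) (G @ F)" unfolding sw_def using assms
    by (metis append_Nil append_Nil2)
  show ?thesis unfolding KK_def
  proof (intro conjI allI impI)
    show "finite (supp ?f)" using sub finite_subset by blast
    fix S assume S: "swclosed S"
    have eq: "F @ G \<in> S \<longleftrightarrow> G @ F \<in> S" using S sw by (simp add: swclosed_def)
    have "sum ?f (supp ?f \<inter> S) = sum ?f ({F @ G, G @ F} \<inter> S)"
      by (rule sum_supp) (use sub in auto)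
    also have "\<dots> = 0"
    proof (cases "F @ G \<in> S")
      case True
      then have "{F @ G, G @ F} \<inter> S = {F @ G, G @ F}" using eq by auto
      then show ?thesis using False by (simp add: mono_def)
    next
      case f: False
      then have "{F @ G, G @ F} \<inter> S = {}" using eq by auto
      then show ?thesis by simp
    qed
    finally show "sum ?f (supp ?f \<inter> S) = 0" .
  qed
qed

lemma Jideal_KK: "f \<in> Jideal \<Longrightarrow> KK f"
  by (induction rule: Jideal.induct)
     (auto intro: KK_zero KK_gen KK_add KK_smult KK_lmult KK_rmult)

lemma wequiv_closed:
  assumes "X \<approx> Y" "swclosed S" "X \<in> S" shows "Y \<in> S"
proof (rule ccontr)
  assume Y: "Y \<notin> S"
  let ?f = "\<lambda>w. mono X w - mono Y w"
  have K: "KK ?f" using assms(1) Jideal_KK by (simp add: wequiv_def)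
  have XY: "X \<noteq> Y" using Y assms by auto
  have "sum ?f (supp ?f \<inter> S) = sum ?f ({X, Y} \<inter> S)"
    by (rule sum_supp) (auto simp: supp_def mono_def)
  also have "{X, Y} \<inter> S = {X}" using assms Y by auto
  finally have "sum ?f (supp ?f \<inter> S) = 1" using XY by (simp add: mono_def)
  then show False using K assms(2) by (simp add: KK_def)
qed



definition ht :: "word \<Rightarrow> int" where
  "ht w = sum_list (map lval w)"

primrec steps :: "int \<Rightarrow> word \<Rightarrow> (int \<times> letter) multiset" where
  "steps h [] = {#}"
| "steps h (a # w) = add_mset (h, a) (steps (h + lval a) w)"

lemma ht_simps[simp]: "ht [] = 0" "ht (a # w) = lval a + ht w" "ht (u @ v) = ht u + ht v"
  by (auto simp: ht_def)

lemma lval_simps[simp]: "lval L = -1" "lval R = 1"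
  by (auto simp: lval_def)

lemma steps_append: "steps h (u @ v) = steps h u + steps (h + ht u) v"
  by (induction u arbitrary: h) (auto simp: algebra_simps)

lemma size_steps: "size (steps h w) = length w"
  by (induction w arbitrary: h) auto

lemma balanced_ht: "balanced w \<longleftrightarrow> ht w = 0"
proof -
  have "ht w = int (length (filter (\<lambda>a. a = R) w)) - int (length (filter (\<lambda>a. a = L) w))"
  proof (induction w)
    case (Cons a w) then show ?case by (cases a) auto
  qed simp
  then show ?thesis by (auto simp: balanced_def)
qed

lemma sw_steps: "sw u v \<Longrightarrow> steps 0 u = steps 0 v"
  unfolding sw_def by (auto simp: steps_append balanced_ht algebra_simps)

lemma wequiv_steps:
  assumes "X \<approx> Y" shows "steps 0 X = steps 0 Y"
proof -
  have "swclosed {w. steps 0 w = steps 0 X}"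
    unfolding swclosed_def using sw_steps by auto
  from wequiv_closed[OF assms this] show ?thesis by simp
qed

lemma wequiv_length: "X \<approx> Y \<Longrightarrow> length X = length Y"
  using wequiv_steps size_steps by metis

lemma wequiv_refl: "X \<approx> X"
proof -
  have "(\<lambda>w. mono X w - mono X w) = (\<lambda>_. 0)" by simp
  then show ?thesis unfolding wequiv_def using Jideal.zero by simp
qed

lemma wequiv_sym: "X \<approx> Y \<Longrightarrow> Y \<approx> X"
proof -
  assume "X \<approx> Y"
  then have "(\<lambda>w. (-1) * (mono X w - mono Y w)) \<in> Jideal"
    unfolding wequiv_def by (rule Jideal.smult)
  moreover have "(\<lambda>w. (-1) * (mono X w - mono Y w)) = (\<lambda>w. mono Y w - mono X w)"
    by (simp add: algebra_simps)
  ultimately show ?thesis unfolding wequiv_def by simp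
qed

lemma wequiv_trans: "X \<approx> Y \<Longrightarrow> Y \<approx> Z \<Longrightarrow> X \<approx> Z"
proof -
  assume "X \<approx> Y" "Y \<approx> Z"
  then have "(\<lambda>w. (mono X w - mono Y w) + (mono Y w - mono Z w)) \<in> Jideal"
    unfolding wequiv_def by (rule Jideal.add)
  moreover have "(\<lambda>w. (mono X w - mono Y w) + (mono Y w - mono Z w)) = (\<lambda>w. mono X w - mono Z w)"
    by (simp add: algebra_simps)
  ultimately show ?thesis unfolding wequiv_def by simp
qed

lemma mono_falg: "mono u \<in> falg"
  by (simp add: falg_def mono_def)

lemma amult_mono_diff_left:
  "amult (mono u) (\<lambda>w. mono p w - mono q w) = (\<lambda>w. mono (u @ p) w - mono (u @ q) w)"
proof
  fix w
  have e: "w = u @ z \<longleftrightarrow> take (length u) w = u \<and> drop (length u) w = z" for z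
    by (metis append_eq_conv_conj)
  show "amult (mono u) (\<lambda>w. mono p w - mono q w) w = mono (u @ p) w - mono (u @ q) w"
    by (simp only: amult_mono_left) (simp add: mono_def e)
qed

lemma amult_mono_diff_right:
  "amult (\<lambda>w. mono p w - mono q w) (mono u) = (\<lambda>w. mono (p @ u) w - mono (q @ u) w)"
proof
  fix w
  have e: "w = z @ u \<longleftrightarrow> length u \<le> length w \<and> drop (length w - length u) w = u
      \<and> take (length w - length u) w = z" for z
  proof
    assume "w = z @ u" then show "length u \<le> length w \<and> drop (length w - length u) w = u
      \<and> take (length w - length u) w = z" by simp
  next
    assume "length u \<le> length w \<and> drop (length w - length u) w = u
      \<and> take (length w - length u) w = z"
    then show "w = z @ u" by (metis append_take_drop_id)
  qed
  show "amult (\<lambda>w. mono p w - mono q w) (mono u) w = mono (p @ u) w - mono (q @ u) w"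
    by (simp only: amult_mono_right) (simp add: mono_def e)
qed

lemma wequiv_swap:
  assumes "F \<noteq> []" "G \<noteq> []" "balanced F" "balanced G"
  shows "a @ F @ G @ b \<approx> a @ G @ F @ b"
proof -
  have "(\<lambda>w. mono (F @ G) w - mono (G @ F) w) \<in> Jideal"
    using assms by (rule Jideal.gen)
  then have "amult (\<lambda>w. mono (F @ G) w - mono (G @ F) w) (mono b) \<in> Jideal"
    using mono_falg by (rule Jideal.rmult)
  then have "(\<lambda>w. mono (F @ G @ b) w - mono (G @ F @ b) w) \<in> Jideal"
    by (simp add: amult_mono_diff_right)
  then have "amult (mono a) (\<lambda>w. mono (F @ G @ b) w - mono (G @ F @ b) w) \<in> Jideal"
    using mono_falg by (rule Jideal.lmult)
  then show ?thesis by (simp add: amult_mono_diff_left wequiv_def)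
qed



lemma H_Suc: "i < length w \<Longrightarrow> ht (take (Suc i) w) = ht (take i w) + lval (w ! i)"
  by (simp add: take_Suc_conv_app_nth)

lemma ek_ht: "k \<le> length w \<Longrightarrow> ek k w = ht (take k w)"
proof (induction k)
  case 0 then show ?case by (simp add: ek_def)
next
  case (Suc k)
  then have "ek (Suc k) w = ek k w + lval (w ! k)" by (simp add: ek_def)
  also have "\<dots> = ht (take k w) + lval (w ! k)" using Suc by simp
  also have "\<dots> = ht (take (Suc k) w)" using Suc H_Suc by simp
  finally show ?case .
qed

lemma ht_take_drop: "ht (take k (drop m w)) = ht (take (m + k) w) - ht (take m w)"
  by (simp add: take_add)

lemma upper_intro:
  assumes "U \<noteq> []" "ht U = 0" "\<And>k. 0 < k \<Longrightarrow> k < length U \<Longrightarrow> ht (take k U) > 0"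
  shows "upper_prime U"
  unfolding upper_prime_def prime_word_def
proof (intro conjI allI impI)
  show "U \<noteq> []" "balanced U" using assms by (auto simp: balanced_ht)
  show "\<not> (\<exists>u v. u \<noteq> [] \<and> v \<noteq> [] \<and> balanced u \<and> balanced v \<and> U = u @ v)"
  proof
    assume "\<exists>u v. u \<noteq> [] \<and> v \<noteq> [] \<and> balanced u \<and> balanced v \<and> U = u @ v"
    then obtain u v where h: "u \<noteq> []" "v \<noteq> []" "balanced u" "U = u @ v" by blast
    have "ht (take (length u) U) > 0" using assms(3)[of "length u"] h by simp
    then show False using h by (simp add: balanced_ht)
  qed
  fix k assume "1 \<le> k \<and> k \<le> length U - 1"
  then have "0 < k" "k < length U" "k \<le> length U" by auto
  then show "0 < ek k U" using assms(3)[of k] ek_ht[of k U] by simp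
qed

lemma lower_intro:
  assumes "U \<noteq> []" "ht U = 0" "\<And>k. 0 < k \<Longrightarrow> k < length U \<Longrightarrow> ht (take k U) < 0"
  shows "lower_prime U"
  unfolding lower_prime_def prime_word_def
proof (intro conjI allI impI)
  show "U \<noteq> []" "balanced U" using assms by (auto simp: balanced_ht)
  show "\<not> (\<exists>u v. u \<noteq> [] \<and> v \<noteq> [] \<and> balanced u \<and> balanced v \<and> U = u @ v)"
  proof
    assume "\<exists>u v. u \<noteq> [] \<and> v \<noteq> [] \<and> balanced u \<and> balanced v \<and> U = u @ v"
    then obtain u v where h: "u \<noteq> []" "v \<noteq> []" "balanced u" "U = u @ v" by blast
    have "ht (take (length u) U) < 0" using assms(3)[of "length u"] h by simp
    then show False using h by (simp add: balanced_ht)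
  qed
  fix k assume "1 \<le> k \<and> k \<le> length U - 1"
  then have "0 < k" "k < length U" "k \<le> length U" by auto
  then show "ek k U < 0" using assms(3)[of k] ek_ht[of k U] by simp
qed

lemma prime_len2: "prime_word U \<Longrightarrow> 1 < length U"
proof (rule ccontr)
  assume p: "prime_word U" and "\<not> 1 < length U"
  then obtain a where "U = [a]" by (cases U) (auto simp: prime_word_def)
  then show False using p by (cases a) (auto simp: prime_word_def balanced_ht)
qed

lemma upper_hd: assumes "upper_prime U" obtains U' where "U = R # U'"
proof -
  have l: "1 < length U" using assms prime_len2 by (auto simp: upper_prime_def)
  then have "ek 1 U > 0" using assms by (auto simp: upper_prime_def)
  then have "lval (U ! 0) > 0" by (simp add: ek_def)
  then have "U ! 0 = R" by (cases "U ! 0") auto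
  then show ?thesis using l that by (cases U) auto
qed

lemma lower_hd: assumes "lower_prime U" obtains U' where "U = L # U'"
proof -
  have l: "1 < length U" using assms prime_len2 by (auto simp: lower_prime_def)
  then have "ek 1 U < 0" using assms by (auto simp: lower_prime_def)
  then have "lval (U ! 0) < 0" by (simp add: ek_def)
  then have "U ! 0 = L" by (cases "U ! 0") auto
  then show ?thesis using l that by (cases U) auto
qed

lemma ex_less_Suc_split: "(\<exists>i<Suc n. P i) \<longleftrightarrow> P 0 \<or> (\<exists>i<n. P (Suc i))"
  by (metis less_Suc_eq_0_disj Suc_less_eq zero_less_Suc)

lemma steps_mem:
  "(c, b) \<in># steps h w \<longleftrightarrow> (\<exists>i<length w. h + ht (take i w) = c \<and> w ! i = b)"
proof (induction w arbitrary: h)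
  case Nil then show ?case by simp
next
  case (Cons a w)
  have "(c, b) \<in># steps h (a # w) \<longleftrightarrow> (c, b) = (h, a) \<or> (c, b) \<in># steps (h + lval a) w"
    by simp
  also have "\<dots> \<longleftrightarrow> (h = c \<and> a = b) \<or> (\<exists>i<length w. h + lval a + ht (take i w) = c \<and> w ! i = b)"
    using Cons by auto
  also have "\<dots> \<longleftrightarrow> (\<exists>i<Suc (length w). h + ht (take i (a # w)) = c \<and> (a # w) ! i = b)"
    unfolding ex_less_Suc_split by (simp add: algebra_simps)
  finally show ?case by simp
qed

lemma ivt:
  "i \<le> length w \<Longrightarrow> 0 \<le> c \<Longrightarrow> ht (take i w) > c \<Longrightarrow> \<exists>j<i. ht (take j w) = c \<and> w ! j = R"
proof (induction i)
  case 0 then show ?case by simp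
next
  case (Suc i)
  have hs: "ht (take (Suc i) w) = ht (take i w) + lval (w ! i)" using Suc.prems H_Suc by simp
  show ?case
  proof (cases "ht (take i w) > c")
    case True
    then show ?thesis using Suc by (meson Suc_leD less_SucI)
  next
    case False
    then have "w ! i = R \<and> ht (take i w) = c" using hs Suc.prems by (cases "w ! i") auto
    then show ?thesis by blast
  qed
qed

lemma core:
  assumes w0: "w \<noteq> []" "w ! 0 = R"
    and ex1: "\<exists>i<length w. ht (take i w) = 0 \<and> w ! i = L"
    and ex2: "\<exists>j<length w. ht (take j w) = -1 \<and> w ! j = R"
  shows "\<exists>c U D e. w = c @ U @ D @ e \<and> upper_prime U \<and> lower_prime D"
proof -
  define n where "n = length w"
  define P where "P i \<longleftrightarrow> i < n \<and> ht (take i w) = 0 \<and> w ! i = L" for i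
  define p where "p = (LEAST i. P i)"
  have Pp: "P p" unfolding p_def using ex1 by (metis LeastI P_def n_def)
  have notP: "\<not> P i" if "i < p" for i using not_less_Least that p_def by blast
  have nonneg: "i \<le> p \<Longrightarrow> ht (take i w) \<ge> 0" for i
  proof (induction i)
    case 0 show ?case by simp
  next
    case (Suc i)
    have ip: "i < p" "i < n" using Suc.prems Pp P_def by auto
    have hs: "ht (take (Suc i) w) = ht (take i w) + lval (w ! i)" using ip H_Suc n_def by simp
    have h0: "ht (take i w) \<ge> 0" using Suc ip by simp
    have r: "ht (take i w) = 0 \<Longrightarrow> w ! i = R" using notP[OF ip(1)] ip(2) P_def by (cases "w ! i") auto
    show ?case
    proof (cases "w ! i")
      case L
      then have "ht (take i w) \<noteq> 0" using r by auto
      then show ?thesis using hs h0 L by simp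
    next
      case R
      then show ?thesis using hs h0 by simp
    qed
  qed
  have p0: "0 < p" using Pp w0 P_def by (cases p) auto
  define Q' where "Q' i \<longleftrightarrow> i < p \<and> ht (take i w) = 0" for i
  define p' where "p' = (GREATEST i. Q' i)"
  have Q'0: "Q' 0" using p0 Q'_def by simp
  have Qp': "Q' p'" unfolding p'_def by (rule GreatestI_nat[of Q' 0 p]) (use Q'0 in \<open>auto simp: Q'_def\<close>)
  have gt: "i \<le> p'" if "Q' i" for i unfolding p'_def
    by (rule Greatest_le_nat[of Q' i p]) (use that in \<open>auto simp: Q'_def\<close>)
  have pos: "ht (take i w) > 0" if "p' < i" "i < p" for i
  proof -
    have "ht (take i w) \<ge> 0" using nonneg that by simp
    moreover have "ht (take i w) \<noteq> 0" using gt[of i] that Q'_def by auto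
    ultimately show ?thesis by simp
  qed
  obtain j0 where j0: "j0 < n" "ht (take j0 w) = -1" "w ! j0 = R" using ex2 n_def by blast
  have pj0: "p < j0"
  proof (rule ccontr)
    assume "\<not> p < j0"
    then have "ht (take j0 w) \<ge> 0" using nonneg by simp
    then show False using j0 by simp
  qed
  define Q where "Q j \<longleftrightarrow> p < j \<and> j < n \<and> ht (take j w) = -1 \<and> w ! j = R" for j
  define q where "q = (LEAST j. Q j)"
  have Qq: "Q q" unfolding q_def by (rule LeastI[of Q j0]) (use j0 pj0 Q_def in auto)
  have notQ: "\<not> Q j" if "j < q" for j using not_less_Least that q_def by blast
  have neg: "p < i \<Longrightarrow> i \<le> q \<Longrightarrow> ht (take i w) \<le> -1" for i
  proof (induction i)
    case 0 then show ?case by simp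
  next
    case (Suc i)
    have iq: "i < q" "i < n" using Suc.prems Qq Q_def by auto
    have hs: "ht (take (Suc i) w) = ht (take i w) + lval (w ! i)" using iq H_Suc n_def by simp
    show ?case
    proof (cases "i = p")
      case True
      then show ?thesis using hs Pp P_def by simp
    next
      case False
      then have pi: "p < i" using Suc.prems by simp
      then have hi: "ht (take i w) \<le> -1" using Suc.IH iq by simp
      have r: "ht (take i w) = -1 \<Longrightarrow> w ! i = L"
        using notQ[OF iq(1)] iq(2) pi Q_def by (cases "w ! i") auto
      show ?thesis
      proof (cases "w ! i")
        case R
        then have "ht (take i w) \<noteq> -1" using r by auto
        then show ?thesis using hs hi R by simp
      next
        case L
        then show ?thesis using hs hi by simp
      qed
    qed
  qed
  have pn: "p < n" using Pp P_def by simp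
  have qn: "q < n" "p < q" using Qq Q_def by auto
  have pp': "p' < p" using Qp' Q'_def by simp
  define U where "U = take (p - p') (drop p' w)"
  define D where "D = take (Suc q - p) (drop p w)"
  have lenU: "length U = p - p'" using U_def pn pp' n_def by simp
  have lenD: "length D = Suc q - p" using D_def qn n_def by simp
  have htU: "ht (take k U) = ht (take (p' + k) w)" if "k \<le> p - p'" for k
  proof -
    have "take k U = take k (drop p' w)" using that U_def by (simp add: min_def)
    then show ?thesis using ht_take_drop[of k p' w] Qp' Q'_def by simp
  qed
  have htD: "ht (take k D) = ht (take (p + k) w)" if "k \<le> Suc q - p" for k
  proof -
    have "take k D = take k (drop p w)" using that D_def by (simp add: min_def)
    then show ?thesis using ht_take_drop[of k p w] Pp P_def by simp
  qed
  have upU: "upper_prime U"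
  proof (rule upper_intro)
    show "U \<noteq> []" using lenU pp' by auto
    have "ht U = ht (take (p - p') U)" using lenU by simp
    also have "\<dots> = 0" using htU[of "p - p'"] pp' Pp P_def by simp
    finally show "ht U = 0" .
    fix k assume "0 < k" "k < length U"
    then show "ht (take k U) > 0" using htU[of k] pos[of "p' + k"] lenU by simp
  qed
  have loD: "lower_prime D"
  proof (rule lower_intro)
    show "D \<noteq> []" using lenD qn by auto
    have "ht D = ht (take (Suc q - p) D)" using lenD by simp
    also have "\<dots> = ht (take (Suc q) w)" using htD[of "Suc q - p"] qn by simp
    also have "\<dots> = 0" using H_Suc[of q w] Qq Q_def n_def by simp
    finally show "ht D = 0" .
    fix k assume "0 < k" "k < length D"
    then have "p + k \<le> q" using lenD qn by simp
    then have "ht (take (p + k) w) \<le> -1" using neg[of "p + k"] \<open>0 < k\<close> by simp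
    then show "ht (take k D) < 0" using htD[of k] \<open>p + k \<le> q\<close> by simp
  qed
  have e1: "take p' w @ U = take p w"
    using take_add[of p' "p - p'" w] pp' U_def by simp
  have e2: "take p w @ D = take (Suc q) w"
    using take_add[of p "Suc q - p" w] qn D_def by simp
  have "w = take p' w @ U @ D @ drop (Suc q) w"
    using e1 e2 by (metis append.assoc append_take_drop_id)
  then show ?thesis using upU loD by blast
qed


lemma al_irrefl: "\<not> alph_less x x"
  unfolding alph_less_def by (rule lexord_irreflexive) auto

lemma al_trans: "alph_less x y \<Longrightarrow> alph_less y z \<Longrightarrow> alph_less x z"
  unfolding alph_less_def by (rule lexord_trans) (auto simp: trans_def)

lemma al_total: "alph_less x y \<or> x = y \<or> alph_less y x"
  unfolding alph_less_def
proof (rule lexord_linear)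
  show "\<forall>a b. (a, b) \<in> {(L, R)} \<or> a = b \<or> (b, a) \<in> {(L, R)}"
  proof (intro allI)
    fix a b show "(a, b) \<in> {(L, R)} \<or> a = b \<or> (b, a) \<in> {(L, R)}"
      by (cases a; cases b) auto
  qed
qed

lemma al_min: "finite S \<Longrightarrow> S \<noteq> {} \<Longrightarrow> \<exists>x\<in>S. \<forall>y\<in>S. alph_le x y"
proof (induction S rule: finite_ne_induct)
  case (singleton x) then show ?case by (simp add: alph_le_def)
next
  case (insert a S)
  then obtain m where m: "m \<in> S" "\<forall>y\<in>S. alph_le m y" by blast
  show ?case
  proof (cases "alph_less a m")
    case True
    have "\<forall>y\<in>insert a S. alph_le a y"
      using m True al_trans by (auto simp: alph_le_def)
    then show ?thesis by blast
  next
    case False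
    then have "alph_le m a" using al_total by (auto simp: alph_le_def)
    then show ?thesis using m by blast
  qed
qed

lemma first_diff:
  "length X = length Y \<Longrightarrow> X \<noteq> Y \<Longrightarrow> \<exists>a x y xs ys. X = a @ x # xs \<and> Y = a @ y # ys \<and> x \<noteq> y"
proof (induction X arbitrary: Y)
  case Nil then show ?case by simp
next
  case (Cons x X)
  then obtain y Y' where Y: "Y = y # Y'" by (cases Y) auto
  show ?case
  proof (cases "x = y")
    case True
    then have "X \<noteq> Y'" "length X = length Y'" using Cons.prems Y by auto
    then obtain a x' y' xs ys where "X = a @ x' # xs" "Y' = a @ y' # ys" "x' \<noteq> y'"
      using Cons.IH by blast
    then show ?thesis using Y True by (metis append_Cons)
  next
    case False
    then show ?thesis using Y by (metis append_Nil)
  qed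
qed

lemma finite_letter: "finite (UNIV :: letter set)"
proof -
  have "UNIV = {L, R}" using letter.exhaust by auto
  then show ?thesis by (metis finite.emptyI finite.insertI)
qed

lemma not_reduced:
  assumes st: "steps h (L # xs) = steps h (R # ys)"
  shows "\<not> reduced (a @ R # ys)"
proof -
  define w where "w = R # ys"
  have "(h, L) \<in># steps h w" using st w_def[symmetric] by (metis steps.simps(2) union_single_eq_member)
  then obtain i where i: "i < length w" "ht (take i w) = 0" "w ! i = L"
    unfolding steps_mem by auto
  have "(h, R) \<in># steps h (L # xs)" using st by simp
  then have "(h, R) \<in># steps (h - 1) xs" by simp
  then obtain k where k: "k < length xs" "h - 1 + ht (take k xs) = h"
    unfolding steps_mem by auto
  then obtain j where j: "j < k" "ht (take j xs) = 0" "xs ! j = R"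
    using ivt[of k xs 0] by auto
  have "j < length xs" using j k by simp
  then have "(h - 1, R) \<in># steps (h - 1) xs" unfolding steps_mem using j by auto
  then have "(h - 1, R) \<in># steps h (L # xs)" by simp
  then have "(h - 1, R) \<in># steps h w" using st w_def by metis
  then obtain j' where j': "j' < length w" "ht (take j' w) = -1" "w ! j' = R"
    unfolding steps_mem by auto
  obtain c U D e where "w = c @ U @ D @ e" "upper_prime U" "lower_prime D"
    using core[of w] i j' w_def by auto
  then have "a @ R # ys = (a @ c) @ U @ D @ e \<and> upper_prime U \<and> lower_prime D"
    using w_def by simp
  then show ?thesis unfolding reduced_def by blast
qed

theorem proposition6p6:
  fixes W :: word
  assumes "balanced W"
  shows "\<exists>X. X \<approx> W \<and> reduced X
            \<and> (\<forall>Y. Y \<approx> W \<and> reduced Y \<longrightarrow> Y = X)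
            \<and> (\<forall>Y. Y \<approx> W \<longrightarrow> alph_le X Y)"
proof -
  define C where "C = {Y. Y \<approx> W}"
  have "C \<subseteq> {xs. set xs \<subseteq> UNIV \<and> length xs = length W}"
    using wequiv_length by (auto simp: C_def)
  then have finC: "finite C"
    using finite_lists_length_eq[OF finite_letter] finite_subset by blast
  have "W \<in> C" using wequiv_refl by (simp add: C_def)
  then obtain X where X: "X \<in> C" "\<forall>Y\<in>C. alph_le X Y"
    using al_min[OF finC] by blast
  have XW: "X \<approx> W" using X C_def by simp
  have red: "reduced X"
    unfolding reduced_def
  proof
    assume "\<exists>a U D b. X = a @ U @ D @ b \<and> upper_prime U \<and> lower_prime D"
    then obtain a U D b where h: "X = a @ U @ D @ b" "upper_prime U" "lower_prime D" by blast
    obtain U' where U': "U = R # U'" using upper_hd[OF h(2)] by blast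
    obtain D' where D': "D = L # D'" using lower_hd[OF h(3)] by blast
    have "a @ D @ U @ b \<approx> a @ U @ D @ b"
      by (rule wequiv_swap) (use h in \<open>auto simp: upper_prime_def lower_prime_def prime_word_def\<close>)
    then have "a @ D @ U @ b \<in> C" using XW h(1) wequiv_trans C_def by auto
    then have le: "alph_le X (a @ D @ U @ b)" using X by blast
    have lt: "alph_less (a @ D @ U @ b) X"
      using h(1) U' D' by (simp add: alph_less_def lexord_same_pref_iff)
    have ne: "X \<noteq> a @ D @ U @ b" using h(1) U' D' by simp
    show False using le lt ne al_trans al_irrefl by (auto simp: alph_le_def)
  qed
  have uniq: "Y = X" if Y: "Y \<approx> W" "reduced Y" for Y
  proof (rule ccontr)
    assume ne: "Y \<noteq> X"
    have "Y \<approx> X" using Y XW wequiv_sym wequiv_trans by blast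
    then have st: "steps 0 Y = steps 0 X" by (rule wequiv_steps)
    then have "length Y = length X" using size_steps by metis
    then obtain a y x ys xs where e: "Y = a @ y # ys" "X = a @ x # xs" "y \<noteq> x"
      using first_diff ne by blast
    show False
    proof (cases y)
      case L
      then have x: "x = R" using e by (cases x) auto
      have "alph_less Y X" using e L x by (simp add: alph_less_def lexord_same_pref_iff)
      moreover have "alph_le X Y" using X Y C_def by auto
      ultimately show False using al_trans al_irrefl ne by (auto simp: alph_le_def)
    next
      case R
      then have x: "x = L" using e by (cases x) auto
      have "steps (ht a) (L # xs) = steps (ht a) (R # ys)"
        using st e R x by (simp add: steps_append)
      then have "\<not> reduced (a @ R # ys)" by (rule not_reduced)
      then show False using Y e R by simp
    qed
  qed
  show ?thesis
    using XW red uniq X C_def by blast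
qed

end
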